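(* Let $T$ be a permutation tableau, and let $i\neq j$ be two labels of $T$, each of which labels a dot (i.e. each is either a column label or the label of a restricted row). Then $i$ lies to the left of $j$ in $\xi(T)$ if and only if either $P_i<P_j$, or $P_j$ is contained in $P_i$.
   Context: Permutation tableaux. Draw a Ferrers diagram in English convention: rows are left-justified, row lengths weakly decrease from top to bottom, and every column is nonempty. Rows of length zero are allowed. A permutation tableau $T$ is a filling of the cells of such a diagram with 0's and 1's satisfying two conditions: (i) every column contains at least one 1; (ii) no cell containing 0 has both a 1 above it in its column and a 1 to its left in its row. Its length $n$ is the number of rows plus the number of columns. Labels. The southeast boundary path of $n$ unit south/west steps, from the top-right corner to the bottom-left corner, has its steps labeled $1,\ldots,n$ in order. Each row gets the label of its south step, and each column the label of its west step. $(i,j)$ denotes the cell in row $i$ and column $j$. Zeros, ones and rows. A 1 is topmost if there is no 1 above it in its column. A 0 is restricted if there is a 1 above it in its column. A rightmost restricted 0 is a restricted 0 with no restricted 0 to its right in its row. A row is unrestricted if it contains no restricted 0; empty rows are unrestricted. Dots. Black dots are placed on the topmost 1's (one per column), each labeled by its column label. White dots are placed on the rightmost restricted 0's (one per restricted row), each labeled by its row label. Alternating paths. An alternating path is a sequence of dots, identified with the sequence of their labels, built as follows. - From a white dot in cell $(i,j)$, the next dot is the black dot of column $j$. - From a black dot in cell $(i,j)$: if row $i$ is unrestricted, the path ends; otherwise the next dot is the white dot of row $i$. For a label $k$ of a dot, $P_k$ is the alternating path starting at that dot. $P_k$ is contained in a path $P$ if $k$ is the label of a dot of $P$; then $P_k$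 is a final segment of $P$. Order on paths. Let $P_a,P_b$ be two such paths, neither contained in the other. Remove their longest common final segment (nothing is removed if they share no dot), obtaining nonempty paths $P'_a,P'_b$. Define $P_a>P_b$ if the last dot of $P'_a$ lies in a row strictly below the last dot of $P'_b$, or in the same row and strictly to its right. Otherwise $P_a<P_b$. The bijection $\xi$. Start with the labels of the unrestricted rows in increasing order. Then process the column labels in decreasing order. For a column $j$: 1. If its black dot is in cell $(i,j)$, insert $j$ immediately to the left of $i$. 2. If column $j$ has white dots in rows $i_1<\cdots<i_k$, insert $i_1\cdots i_k$, in increasing order, immediately to the left of $j$. The result is the permutation $\xi(T)$ of $[n]$. *)

theory Defs
  imports Main
begin

text \<open>
The southeast boundary path has steps labelled 1..n; R is the set of labels of
south steps (= row labels); the remaining labels in {1..n} are column labels.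
Row i contains a cell in column j iff i is a row label, j a column label and i < j
(the west step j comes after the south step i on the path).
Row i is above row i' iff i < i'; column j is to the left of column j' iff j > j'.
The filling is f :: nat => nat => bool (True = 1, False = 0); only its values on
cells matter.
\<close>

definition cols :: "nat \<Rightarrow> nat set \<Rightarrow> nat set" where
  "cols n R = {1..n} - R"

definition is_cell :: "nat \<Rightarrow> nat set \<Rightarrow> nat \<Rightarrow> nat \<Rightarrow> bool" where
  "is_cell n R i j \<longleftrightarrow> i \<in> R \<and> j \<in> cols n R \<and> i < j"

definition perm_tableau :: "nat \<Rightarrow> nat set \<Rightarrow> (nat \<Rightarrow> nat \<Rightarrow> bool) \<Rightarrow> bool" where
  "perm_tableau n R f \<longleftrightarrow>
     R \<subseteq> {1..n} \<and>
     (\<forall>j \<in> cols n R. \<exists>i. is_cell n R i j \<and> f i j) \<and>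
     (\<forall>i j. is_cell n R i j \<and> \<not> f i j \<longrightarrow>
        \<not> ((\<exists>i'. i' < i \<and> is_cell n R i' j \<and> f i' j) \<and>
           (\<exists>j'. j' > j \<and> is_cell n R i j' \<and> f i j')))"

definition topmost1 :: "nat \<Rightarrow> nat set \<Rightarrow> (nat \<Rightarrow> nat \<Rightarrow> bool) \<Rightarrow> nat \<Rightarrow> nat \<Rightarrow> bool" where
  "topmost1 n R f i j \<longleftrightarrow> is_cell n R i j \<and> f i j \<and>
     \<not> (\<exists>i'. i' < i \<and> is_cell n R i' j \<and> f i' j)"

definition restricted0 :: "nat \<Rightarrow> nat set \<Rightarrow> (nat \<Rightarrow> nat \<Rightarrow> bool) \<Rightarrow> nat \<Rightarrow> nat \<Rightarrow> bool" where
  "restricted0 n R f i j \<longleftrightarrow> is_cell n R i j \<and> \<not> f i j \<and>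
     (\<exists>i'. i' < i \<and> is_cell n R i' j \<and> f i' j)"

text \<open>A restricted 0 with no restricted 0 to its right (i.e. in a column with smaller label).\<close>
definition rightmost_r0 :: "nat \<Rightarrow> nat set \<Rightarrow> (nat \<Rightarrow> nat \<Rightarrow> bool) \<Rightarrow> nat \<Rightarrow> nat \<Rightarrow> bool" where
  "rightmost_r0 n R f i j \<longleftrightarrow> restricted0 n R f i j \<and>
     \<not> (\<exists>j'. j' < j \<and> restricted0 n R f i j')"

definition restricted_row :: "nat \<Rightarrow> nat set \<Rightarrow> (nat \<Rightarrow> nat \<Rightarrow> bool) \<Rightarrow> nat \<Rightarrow> bool" where
  "restricted_row n R f i \<longleftrightarrow> i \<in> R \<and> (\<exists>j. restricted0 n R f i j)"

definition unrestricted_row :: "nat \<Rightarrow> nat set \<Rightarrow> (nat \<Rightarrow> nat \<Rightarrow> bool) \<Rightarrow> nat \<Rightarrow> bool" where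
  "unrestricted_row n R f i \<longleftrightarrow> i \<in> R \<and> \<not> (\<exists>j. restricted0 n R f i j)"

text \<open>Labels of dots: column labels (black dots) and labels of restricted rows (white dots).\<close>
definition dot_labels :: "nat \<Rightarrow> nat set \<Rightarrow> (nat \<Rightarrow> nat \<Rightarrow> bool) \<Rightarrow> nat set" where
  "dot_labels n R f = cols n R \<union> {i. restricted_row n R f i}"

definition top1 :: "nat \<Rightarrow> nat set \<Rightarrow> (nat \<Rightarrow> nat \<Rightarrow> bool) \<Rightarrow> nat \<Rightarrow> nat" where
  "top1 n R f j = (THE i. topmost1 n R f i j)"

definition rr0 :: "nat \<Rightarrow> nat set \<Rightarrow> (nat \<Rightarrow> nat \<Rightarrow> bool) \<Rightarrow> nat \<Rightarrow> nat" where
  "rr0 n R f i = (THE j. rightmost_r0 n R f i j)"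

definition dot_pos :: "nat \<Rightarrow> nat set \<Rightarrow> (nat \<Rightarrow> nat \<Rightarrow> bool) \<Rightarrow> nat \<Rightarrow> nat \<times> nat" where
  "dot_pos n R f k = (if k \<in> cols n R then (top1 n R f k, k) else (k, rr0 n R f k))"

text \<open>Next dot on an alternating path (None = the path ends).\<close>
definition nxt :: "nat \<Rightarrow> nat set \<Rightarrow> (nat \<Rightarrow> nat \<Rightarrow> bool) \<Rightarrow> nat \<Rightarrow> nat option" where
  "nxt n R f k = (if k \<in> cols n R then
       (if restricted_row n R f (top1 n R f k) then Some (top1 n R f k) else None)
     else Some (rr0 n R f k))"

definition is_alt_path :: "nat \<Rightarrow> nat set \<Rightarrow> (nat \<Rightarrow> nat \<Rightarrow> bool) \<Rightarrow> nat \<Rightarrow> nat list \<Rightarrow> bool" where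
  "is_alt_path n R f k ps \<longleftrightarrow> ps \<noteq> [] \<and> hd ps = k \<and>
     (\<forall>m. Suc m < length ps \<longrightarrow> nxt n R f (ps ! m) = Some (ps ! Suc m)) \<and>
     nxt n R f (last ps) = None"

text \<open>P_k: the alternating path starting at the dot labelled k, as its list of labels.\<close>
definition alt_path :: "nat \<Rightarrow> nat set \<Rightarrow> (nat \<Rightarrow> nat \<Rightarrow> bool) \<Rightarrow> nat \<Rightarrow> nat list" where
  "alt_path n R f k = (THE ps. is_alt_path n R f k ps)"

definition common_suffix_len :: "'a list \<Rightarrow> 'a list \<Rightarrow> nat" where
  "common_suffix_len xs ys = (GREATEST c. c \<le> length xs \<and> c \<le> length ys \<and>
      drop (length xs - c) xs = drop (length ys - c) ys)"

text \<open>P_a > P_b (for paths neither contained in the other).\<close>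
definition path_greater :: "nat \<Rightarrow> nat set \<Rightarrow> (nat \<Rightarrow> nat \<Rightarrow> bool) \<Rightarrow> nat \<Rightarrow> nat \<Rightarrow> bool" where
  "path_greater n R f a b \<longleftrightarrow>
     (let pa = alt_path n R f a; pb = alt_path n R f b;
          c = common_suffix_len pa pb;
          la = dot_pos n R f (last (take (length pa - c) pa));
          lb = dot_pos n R f (last (take (length pb - c) pb))
      in fst la > fst lb \<or> (fst la = fst lb \<and> snd la < snd lb))"

definition path_less :: "nat \<Rightarrow> nat set \<Rightarrow> (nat \<Rightarrow> nat \<Rightarrow> bool) \<Rightarrow> nat \<Rightarrow> nat \<Rightarrow> bool" where
  "path_less n R f a b \<longleftrightarrow>
     a \<notin> set (alt_path n R f b) \<and> b \<notin> set (alt_path n R f a) \<and>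
     \<not> path_greater n R f a b"

definition ins_left :: "'a list \<Rightarrow> 'a \<Rightarrow> 'a list \<Rightarrow> 'a list" where
  "ins_left ws y xs = takeWhile (\<lambda>z. z \<noteq> y) xs @ ws @ dropWhile (\<lambda>z. z \<noteq> y) xs"

definition xi_step :: "nat \<Rightarrow> nat set \<Rightarrow> (nat \<Rightarrow> nat \<Rightarrow> bool) \<Rightarrow> nat list \<Rightarrow> nat \<Rightarrow> nat list" where
  "xi_step n R f xs j =
     (let xs1 = ins_left [j] (top1 n R f j) xs
      in ins_left (sorted_list_of_set {i. rightmost_r0 n R f i j}) j xs1)"

definition xi :: "nat \<Rightarrow> nat set \<Rightarrow> (nat \<Rightarrow> nat \<Rightarrow> bool) \<Rightarrow> nat list" where
  "xi n R f = foldl (xi_step n R f)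
     (sorted_list_of_set {i. unrestricted_row n R f i})
     (rev (sorted_list_of_set (cols n R)))"

end

theory Submission
  imports Defs
begin


definition before :: "'a list \<Rightarrow> 'a \<Rightarrow> 'a \<Rightarrow> bool" where
  "before xs x y \<longleftrightarrow> (\<exists>us vs ws. xs = us @ x # vs @ y # ws)"

lemma before_Nil[simp]: "\<not> before [] x y"
  by (auto simp: before_def)

lemma before_Cons[simp]: "before (a # xs) x y \<longleftrightarrow> (x = a \<and> y \<in> set xs) \<or> before xs x y"
proof
  assume "before (a # xs) x y"
  then obtain us vs ws where e: "a # xs = us @ x # vs @ y # ws" by (auto simp: before_def)
  show "(x = a \<and> y \<in> set xs) \<or> before xs x y"
  proof (cases us)
    case Nil then show ?thesis using e by auto
  next
    case (Cons u us') then show ?thesis using e by (auto simp: before_def)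
  qed
next
  assume "(x = a \<and> y \<in> set xs) \<or> before xs x y"
  then show "before (a # xs) x y"
  proof
    assume h: "x = a \<and> y \<in> set xs"
    then obtain vs ws where "xs = vs @ y # ws" by (meson split_list)
    then have "a # xs = [] @ x # vs @ y # ws" using h by simp
    then show ?thesis unfolding before_def by blast
  next
    assume "before xs x y"
    then obtain us vs ws where "xs = us @ x # vs @ y # ws" by (auto simp: before_def)
    then have "a # xs = (a # us) @ x # vs @ y # ws" by simp
    then show ?thesis unfolding before_def by blast
  qed
qed

lemma before_append: "before (xs @ ys) x y \<longleftrightarrow> before xs x y \<or> before ys x y \<or> (x \<in> set xs \<and> y \<in> set ys)"
  by (induction xs) auto

lemma before_set: "before xs x y \<Longrightarrow> x \<in> set xs \<and> y \<in> set xs"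
  by (induction xs) auto

lemma before_antisym: "distinct xs \<Longrightarrow> before xs x y \<Longrightarrow> before xs y x \<Longrightarrow> False"
  by (induction xs) (auto dest: before_set)

lemma before_irrefl: "distinct xs \<Longrightarrow> \<not> before xs x x"
  using before_antisym by fastforce

lemma before_sorted: "sorted_wrt (<) xs \<Longrightarrow> before xs x y \<longleftrightarrow> x \<in> set xs \<and> y \<in> set xs \<and> (x::nat) < y"
  by (induction xs) auto

lemma ins_left_split: "p \<notin> set T \<Longrightarrow> ins_left ws p (T @ p # Rest) = T @ ws @ p # Rest"
  by (induction T) (auto simp: ins_left_def)

lemma ins_left_Nil: "ins_left [] y xs = xs"
  by (simp add: ins_left_def)

lemma ins_left_append: "y \<notin> set ws \<Longrightarrow> ins_left (ws @ vs) y xs = ins_left vs y (ins_left ws y xs)"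
proof (cases "y \<in> set xs")
  case True
  then obtain T Rest where xs: "xs = T @ y # Rest" "y \<notin> set T" by (meson split_list_first)
  assume "y \<notin> set ws"
  then show ?thesis using xs by (simp add: ins_left_split flip: append_assoc)
next
  case False
  assume "y \<notin> set ws"
  have a: "ins_left zs y us = us @ zs" if "y \<notin> set us" for zs us
    using that by (induction us) (auto simp: ins_left_def)
  show ?thesis using False \<open>y \<notin> set ws\<close> by (simp add: a)
qed

lemma ins_left_foldl: "y \<notin> set ws \<Longrightarrow> ins_left ws y xs = foldl (\<lambda>xs w. ins_left [w] y xs) xs ws"
proof (induction ws rule: rev_induct)
  case Nil then show ?case by (simp add: ins_left_Nil)
next
  case (snoc w ws) then show ?case by (simp add: ins_left_append)
qed

lemma csl:
  fixes xs ys :: "'a list"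
  defines "c \<equiv> common_suffix_len xs ys"
  shows "c \<le> length xs \<and> c \<le> length ys \<and> drop (length xs - c) xs = drop (length ys - c) ys"
    and "c < length xs \<Longrightarrow> c < length ys \<Longrightarrow> xs ! (length xs - Suc c) \<noteq> ys ! (length ys - Suc c)"
proof -
  let ?P = "\<lambda>c. c \<le> length xs \<and> c \<le> length ys \<and> drop (length xs - c) xs = drop (length ys - c) ys"
  have P0: "?P 0" by simp
  have bd: "\<And>y. ?P y \<Longrightarrow> y \<le> length xs" by simp
  show Pc: "?P c" unfolding c_def common_suffix_len_def by (rule GreatestI_nat[where P="?P", OF P0 bd])
  assume l: "c < length xs" "c < length ys"
  show "xs ! (length xs - Suc c) \<noteq> ys ! (length ys - Suc c)"
  proof
    assume eq: "xs ! (length xs - Suc c) = ys ! (length ys - Suc c)"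
    have "drop (length xs - Suc c) xs = xs ! (length xs - Suc c) # drop (length xs - c) xs"
      using l by (metis Cons_nth_drop_Suc Suc_diff_Suc diff_less zero_less_Suc le_less_trans zero_le)
    moreover have "drop (length ys - Suc c) ys = ys ! (length ys - Suc c) # drop (length ys - c) ys"
      using l by (metis Cons_nth_drop_Suc Suc_diff_Suc diff_less zero_less_Suc le_less_trans zero_le)
    ultimately have "?P (Suc c)" using Pc eq l by simp
    then have "Suc c \<le> c" unfolding c_def common_suffix_len_def by (rule Greatest_le_nat[where P="?P", OF _ bd])
    then show False by simp
  qed
qed



locale forest =
  fixes D U :: "nat set" and par :: "nat \<Rightarrow> nat" and gt :: "nat \<Rightarrow> nat \<Rightarrow> bool"
  assumes disj: "D \<inter> U = {}"
begin

definition rel :: "(nat \<times> nat) set" where "rel = {(k, par k) | k. k \<in> D}"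
definition sibl where "sibl a b \<longleftrightarrow> (a \<in> D \<and> b \<in> D \<and> par a = par b) \<or> (a \<in> U \<and> b \<in> U)"
definition ltr where "ltr a b \<longleftrightarrow> (if a \<in> U then a < b else \<not> gt a b)"
definition Q where "Q x y \<longleftrightarrow> (x, y) \<in> rel\<^sup>+ \<or>
   (\<exists>a b. (x, a) \<in> rel\<^sup>* \<and> (y, b) \<in> rel\<^sup>* \<and> a \<noteq> b \<and> sibl a b \<and> ltr a b)"
definition Inv where "Inv S xs \<longleftrightarrow> distinct xs \<and> set xs = S \<and> (\<forall>x\<in>S. \<not> Q x x) \<and>
   (\<forall>x\<in>S. \<forall>y\<in>S. x \<noteq> y \<longrightarrow> (before xs x y \<longleftrightarrow> Q x y))"
definition closed where "closed S \<longleftrightarrow> (\<forall>y\<in>S. y \<in> D \<longrightarrow> par y \<in> S)"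

lemma rel_iff[simp]: "(x, y) \<in> rel \<longleftrightarrow> x \<in> D \<and> y = par x"
  by (auto simp: rel_def)

lemma rtr_D: "x \<in> D \<Longrightarrow> (x, z) \<in> rel\<^sup>* \<longleftrightarrow> z = x \<or> (par x, z) \<in> rel\<^sup>*"
  by (auto elim: converse_rtranclE intro: converse_rtrancl_into_rtrancl)

lemma rtr_notD: "x \<notin> D \<Longrightarrow> (x, z) \<in> rel\<^sup>* \<longleftrightarrow> z = x"
  by (auto elim: converse_rtranclE)

lemma tr_D: "x \<in> D \<Longrightarrow> (x, z) \<in> rel\<^sup>+ \<longleftrightarrow> (par x, z) \<in> rel\<^sup>*"
  by (auto elim: converse_tranclE intro: rtrancl_into_trancl2 dest: trancl_into_rtrancl)

lemma tr_notD: "x \<notin> D \<Longrightarrow> (x, z) \<notin> rel\<^sup>+"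
  by (auto elim: converse_tranclE)

lemma closed_rtr: assumes "(y, z) \<in> rel\<^sup>*" "closed S" "y \<in> S" shows "z \<in> S"
  using assms by (induction rule: rtrancl_induct) (auto simp: closed_def)

lemma closed_insert: "closed S \<Longrightarrow> par k \<in> S \<Longrightarrow> closed (insert k S)"
  by (auto simp: closed_def)

lemma Inv_init:
  assumes "finite U"
  shows "Inv U (sorted_list_of_set U)"
proof -
  have Qu: "Q x y \<longleftrightarrow> x \<noteq> y \<and> x < y" if "x \<in> U" "y \<in> U" for x y
  proof -
    have "x \<notin> D" "y \<notin> D" using that disj by auto
    then show ?thesis unfolding Q_def using that
      by (auto simp: rtr_notD tr_notD sibl_def ltr_def)
  qed
  show ?thesis unfolding Inv_def using assms
    by (auto simp: Qu before_sorted strict_sorted_list_of_set)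
qed

lemma Inv_step:
  assumes I: "Inv S xs" and kD: "k \<in> D" and kS: "k \<notin> S" and pS: "par k \<in> S"
    and cl: "closed S"
    and acyc: "\<And>x. (x, x) \<notin> rel\<^sup>+"
    and H1: "\<And>y. y \<in> S \<Longrightarrow> (y, k) \<notin> rel\<^sup>*"
    and H2: "\<And>b. b \<in> S \<Longrightarrow> b \<in> D \<Longrightarrow> par b = par k \<Longrightarrow> gt k b \<and> \<not> gt b k"
  shows "Inv (insert k S) (ins_left [k] (par k) xs) \<and> closed (insert k S)"
proof -
  define p where "p = par k"
  have kU: "k \<notin> U" using kD disj by auto
  have pS': "p \<in> S" using pS p_def by simp
  have clr: "\<And>y z. y \<in> S \<Longrightarrow> (y, z) \<in> rel\<^sup>* \<Longrightarrow> z \<in> S" using cl closed_rtr by blast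
  have dist: "distinct xs" and setx: "set xs = S" and irr: "\<And>x. x \<in> S \<Longrightarrow> \<not> Q x x"
    and ord: "\<And>x y. x \<in> S \<Longrightarrow> y \<in> S \<Longrightarrow> x \<noteq> y \<Longrightarrow> before xs x y \<longleftrightarrow> Q x y"
    using I by (auto simp: Inv_def)
  obtain T Rest where xs: "xs = T @ p # Rest" "p \<notin> set T"
    using pS setx p_def by (metis split_list_first)
  have xs': "ins_left [k] (par k) xs = T @ k # p # Rest"
    using xs by (simp add: ins_left_split p_def)
  have kstar: "\<And>z. (k, z) \<in> rel\<^sup>* \<longleftrightarrow> z = k \<or> (p, z) \<in> rel\<^sup>*" using rtr_D[OF kD] p_def by simp
  have kplus: "\<And>z. (k, z) \<in> rel\<^sup>+ \<longleftrightarrow> (p, z) \<in> rel\<^sup>*" using tr_D[OF kD] p_def by simp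
  have noK: "\<not> (sibl k b \<and> ltr k b)" if "b \<in> S" for b
    using H2[OF that] kU p_def by (auto simp: sibl_def ltr_def)
  define W where "W x y \<longleftrightarrow> (\<exists>a b. (x, a) \<in> rel\<^sup>* \<and> (y, b) \<in> rel\<^sup>* \<and> a \<noteq> b \<and> sibl a b \<and> ltr a b)" for x y
  have QW: "Q x y \<longleftrightarrow> (x, y) \<in> rel\<^sup>+ \<or> W x y" for x y unfolding Q_def W_def by simp
  have WA: "W k y \<longleftrightarrow> W p y" if yS: "y \<in> S" for y
  proof
    assume "W k y"
    then obtain a b where ab: "(k, a) \<in> rel\<^sup>*" "(y, b) \<in> rel\<^sup>*" "a \<noteq> b" "sibl a b" "ltr a b"
      unfolding W_def by blast
    have "b \<in> S" using clr[OF yS ab(2)] .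
    then have "a \<noteq> k" using noK ab by blast
    then have "(p, a) \<in> rel\<^sup>*" using ab(1) kstar by metis
    then show "W p y" unfolding W_def using ab by blast
  next
    assume "W p y"
    then obtain a b where ab: "(p, a) \<in> rel\<^sup>*" "(y, b) \<in> rel\<^sup>*" "a \<noteq> b" "sibl a b" "ltr a b"
      unfolding W_def by blast
    then have "(k, a) \<in> rel\<^sup>*" using kstar by metis
    then show "W k y" unfolding W_def using ab by blast
  qed
  have QA: "Q k y \<longleftrightarrow> y = p \<or> Q p y" if yS: "y \<in> S" for y
  proof -
    have "Q k y \<longleftrightarrow> (p, y) \<in> rel\<^sup>* \<or> W p y" using QW[of k y] kplus[of y] WA[OF yS] by simp
    also have "\<dots> \<longleftrightarrow> y = p \<or> Q p y"
      using QW[of p y] rtrancl_eq_or_trancl[of p y rel] by blast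
    finally show ?thesis .
  qed
  have QB: "Q y k \<longleftrightarrow> Q y p" if yS: "y \<in> S" for y
  proof -
    have n1: "(y, k) \<notin> rel\<^sup>+" using H1[OF yS] trancl_into_rtrancl by metis
    have eq: "(\<exists>a. (y, a) \<in> rel\<^sup>* \<and> a \<noteq> k \<and> sibl a k \<and> ltr a k) \<longleftrightarrow> (y, p) \<in> rel\<^sup>+"
    proof
      assume "\<exists>a. (y, a) \<in> rel\<^sup>* \<and> a \<noteq> k \<and> sibl a k \<and> ltr a k"
      then obtain a where a1: "(y, a) \<in> rel\<^sup>*" and a2: "sibl a k" by blast
      have "a \<in> D" "par a = p" using a2 kU p_def unfolding sibl_def by auto
      then have "(a, p) \<in> rel" by simp
      then show "(y, p) \<in> rel\<^sup>+" using a1 by (meson rtrancl_into_trancl1)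
    next
      assume "(y, p) \<in> rel\<^sup>+"
      then obtain a where a: "(y, a) \<in> rel\<^sup>*" "(a, p) \<in> rel" by (meson tranclD2)
      have aS: "a \<in> S" using clr[OF yS a(1)] .
      then have "a \<noteq> k" using kS by auto
      moreover have "a \<in> D" "par a = par k" using a(2) p_def by auto
      moreover have "a \<notin> U" using \<open>a \<in> D\<close> disj by auto
      ultimately have "sibl a k" "ltr a k" using H2[OF aS] kD unfolding sibl_def ltr_def by auto
      then show "\<exists>a. (y, a) \<in> rel\<^sup>* \<and> a \<noteq> k \<and> sibl a k \<and> ltr a k"
        using a(1) \<open>a \<noteq> k\<close> by blast
    qed
    have Wy: "W y k \<longleftrightarrow> (\<exists>a. (y, a) \<in> rel\<^sup>* \<and> a \<noteq> k \<and> sibl a k \<and> ltr a k) \<or> W y p"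
    proof
      assume "W y k"
      then obtain a b where ab: "(y, a) \<in> rel\<^sup>*" "(k, b) \<in> rel\<^sup>*" "a \<noteq> b" "sibl a b" "ltr a b"
        unfolding W_def by blast
      show "(\<exists>a. (y, a) \<in> rel\<^sup>* \<and> a \<noteq> k \<and> sibl a k \<and> ltr a k) \<or> W y p"
      proof (cases "b = k")
        case True then show ?thesis using ab by blast
      next
        case False then have "(p, b) \<in> rel\<^sup>*" using ab(2) kstar by metis
        then show ?thesis unfolding W_def using ab by blast
      qed
    next
      assume "(\<exists>a. (y, a) \<in> rel\<^sup>* \<and> a \<noteq> k \<and> sibl a k \<and> ltr a k) \<or> W y p"
      then show "W y k"
      proof
        assume "\<exists>a. (y, a) \<in> rel\<^sup>* \<and> a \<noteq> k \<and> sibl a k \<and> ltr a k"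
        then show "W y k" unfolding W_def by blast
      next
        assume "W y p"
        then obtain a b where ab: "(y, a) \<in> rel\<^sup>*" "(p, b) \<in> rel\<^sup>*" "a \<noteq> b" "sibl a b" "ltr a b"
          unfolding W_def by blast
        then have "(k, b) \<in> rel\<^sup>*" using kstar by metis
        then show "W y k" unfolding W_def using ab by blast
      qed
    qed
    have "Q y k \<longleftrightarrow> W y k" using QW[of y k] n1 by simp
    also have "\<dots> \<longleftrightarrow> Q y p" using Wy eq QW[of y p] by simp
    finally show ?thesis .
  qed
  have Qkk: "\<not> Q k k"
  proof
    assume "Q k k"
    moreover have "(k, k) \<notin> rel\<^sup>+" using acyc by metis
    ultimately have "W k k" using QW[of k k] by simp
    then obtain a b where ab: "(k, a) \<in> rel\<^sup>*" "(k, b) \<in> rel\<^sup>*" "a \<noteq> b" "sibl a b" "ltr a b"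
      unfolding W_def by blast
    show False
    proof (cases "a = k")
      case True
      then have "b \<noteq> k" using ab(3) by simp
      then have "(p, b) \<in> rel\<^sup>*" using ab(2) kstar by metis
      then have "b \<in> S" using clr[OF pS] p_def by metis
      then show ?thesis using noK ab(4,5) True by metis
    next
      case False
      then have pa: "(p, a) \<in> rel\<^sup>*" using ab(1) kstar by metis
      show ?thesis
      proof (cases "b = k")
        case True
        then have "a \<in> D" "par a = p" using ab(4) kU p_def unfolding sibl_def by auto
        then have "(a, p) \<in> rel" by simp
        then have "(p, p) \<in> rel\<^sup>+" using pa by (meson rtrancl_into_trancl1)
        then show ?thesis using acyc by metis
      next
        case False
        then have "(p, b) \<in> rel\<^sup>*" using ab(2) kstar by metis
        then have "W p p" unfolding W_def using pa ab(3-5) by blast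
        then have "Q p p" using QW by simp
        then show ?thesis using irr pS p_def by metis
      qed
    qed
  qed
  have bef_old: "before (T @ k # p # Rest) x y \<longleftrightarrow> before xs x y" if "x \<noteq> k" "y \<noteq> k" for x y
    using that xs by (simp add: before_append)
  have kT: "k \<notin> set T" "k \<noteq> p" "k \<notin> set Rest" using xs kS setx by auto
  have pR: "p \<notin> set Rest" using dist xs by simp
  have bef_k1: "before (T @ k # p # Rest) k y \<longleftrightarrow> y = p \<or> before xs p y" if "y \<in> S" for y
  proof -
    have "\<not> before T k y" "\<not> before T p y" "\<not> before Rest k y" "\<not> before Rest p y"
      using kT xs(2) pR before_set by metis+
    moreover have "y \<noteq> k" using that kS by auto
    ultimately show ?thesis using xs kT by (simp add: before_append)
  qed
  have bef_k2: "before (T @ k # p # Rest) y k \<longleftrightarrow> before xs y p" if "y \<in> S" for y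
  proof -
    have "\<not> before T y k" "\<not> before T y p" "\<not> before Rest y k" "\<not> before Rest y p"
      using kT xs(2) pR before_set by metis+
    moreover have "y \<noteq> k" using that kS by auto
    ultimately show ?thesis using xs(1) kT pR by (simp add: before_append)
  qed
  have "Inv (insert k S) (T @ k # p # Rest)"
    unfolding Inv_def
  proof (intro conjI ballI impI)
    show "distinct (T @ k # p # Rest)" using dist xs kS setx by auto
    show "set (T @ k # p # Rest) = insert k S" using xs setx by auto
    show "\<not> Q x x" if "x \<in> insert k S" for x using that Qkk irr by auto
    fix x y assume x: "x \<in> insert k S" and y: "y \<in> insert k S" and xy: "x \<noteq> y"
    show "before (T @ k # p # Rest) x y \<longleftrightarrow> Q x y"
    proof (cases "x = k")
      case True
      then have yS: "y \<in> S" using y xy by auto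
      show ?thesis using True bef_k1[OF yS] QA[OF yS] ord[OF pS' yS] by (cases "y = p") auto
    next
      case xk: False
      then have xS: "x \<in> S" using x by auto
      show ?thesis
      proof (cases "y = k")
        case True
        show ?thesis using True bef_k2[OF xS] QB[OF xS] ord[OF xS pS'] irr[OF pS']
          before_irrefl[OF dist] by (cases "x = p") auto
      next
        case False
        then show ?thesis using bef_old[OF xk False] ord[OF xS] y xy by auto
      qed
    qed
  qed
  then show ?thesis using xs' closed_insert[OF cl] pS p_def by simp
qed

end


lemma all_nat_split: "(\<forall>m::nat. P m) \<longleftrightarrow> P 0 \<and> (\<forall>m. P (Suc m))"
  by (metis not0_implies_Suc)

locale ptab =
  fixes n :: nat and R :: "nat set" and f :: "nat \<Rightarrow> nat \<Rightarrow> bool"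
  assumes PT: "perm_tableau n R f"
begin

definition DD where "DD = dot_labels n R f"
definition UU where "UU = {i. unrestricted_row n R f i}"
definition par where "par k = (if k \<in> cols n R then top1 n R f k else rr0 n R f k)"
definition gt where "gt a b \<longleftrightarrow> fst (dot_pos n R f a) > fst (dot_pos n R f b) \<or>
   (fst (dot_pos n R f a) = fst (dot_pos n R f b) \<and> snd (dot_pos n R f a) < snd (dot_pos n R f b))"

lemma Rsub: "R \<subseteq> {1..n}" using PT by (simp add: perm_tableau_def)
lemma colsub: "cols n R \<subseteq> {1..n}" by (auto simp: cols_def)
lemma colR: "j \<in> cols n R \<Longrightarrow> j \<notin> R" by (auto simp: cols_def)
lemma cell: "is_cell n R i j \<Longrightarrow> i \<in> R \<and> j \<in> cols n R \<and> i < j" by (simp add: is_cell_def)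

lemma top1_spec: assumes "j \<in> cols n R" shows "topmost1 n R f (top1 n R f j) j"
proof -
  let ?P = "\<lambda>i. is_cell n R i j \<and> f i j"
  obtain i where "?P i" using PT assms by (auto simp: perm_tableau_def)
  define i0 where "i0 = (LEAST i. ?P i)"
  have "?P i0" unfolding i0_def by (rule LeastI) fact
  moreover have "\<And>i'. i' < i0 \<Longrightarrow> \<not> ?P i'" unfolding i0_def by (rule not_less_Least)
  ultimately have t: "topmost1 n R f i0 j" by (auto simp: topmost1_def)
  have "\<And>b. topmost1 n R f b j \<Longrightarrow> b = i0"
    using t by (metis linorder_neqE_nat topmost1_def)
  then have "top1 n R f j = i0" unfolding top1_def using t by (rule the_equality[rotated])
  then show ?thesis using t by simp
qed

lemma top1_facts: assumes "j \<in> cols n R"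
  shows "is_cell n R (top1 n R f j) j" "f (top1 n R f j) j" "top1 n R f j \<in> R" "top1 n R f j < j"
  using top1_spec[OF assms] cell by (auto simp: topmost1_def)

lemma rr0_spec: assumes "restricted_row n R f i" shows "rightmost_r0 n R f i (rr0 n R f i)"
proof -
  let ?P = "\<lambda>j. restricted0 n R f i j"
  obtain j where "?P j" using assms by (auto simp: restricted_row_def)
  define j0 where "j0 = (LEAST j. ?P j)"
  have "?P j0" unfolding j0_def by (rule LeastI) fact
  moreover have "\<And>j'. j' < j0 \<Longrightarrow> \<not> ?P j'" unfolding j0_def by (rule not_less_Least)
  ultimately have t: "rightmost_r0 n R f i j0" by (auto simp: rightmost_r0_def)
  have "\<And>b. rightmost_r0 n R f i b \<Longrightarrow> b = j0"
    using t by (metis linorder_neqE_nat rightmost_r0_def)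
  then have "rr0 n R f i = j0" unfolding rr0_def using t by (rule the_equality[rotated])
  then show ?thesis using t by simp
qed

lemma rr0_unique: assumes "rightmost_r0 n R f i j" shows "rr0 n R f i = j" "restricted_row n R f i"
proof -
  show rr: "restricted_row n R f i" using assms cell
    by (auto simp: restricted_row_def rightmost_r0_def restricted0_def)
  have "\<And>b. rightmost_r0 n R f i b \<Longrightarrow> b = j"
    using assms by (metis linorder_neqE_nat rightmost_r0_def)
  then show "rr0 n R f i = j" unfolding rr0_def using assms by (rule the_equality[rotated])
qed

lemma rr0_facts: assumes "restricted_row n R f i"
  shows "restricted0 n R f i (rr0 n R f i)" "rr0 n R f i \<in> cols n R" "i < rr0 n R f i"
    "rr0 n R f i \<le> n" "i \<in> R" "rr0 n R f i \<notin> R"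
proof -
  have a: "restricted0 n R f i (rr0 n R f i)" using rr0_spec[OF assms] by (simp add: rightmost_r0_def)
  then have b: "is_cell n R i (rr0 n R f i)" by (simp add: restricted0_def)
  show "restricted0 n R f i (rr0 n R f i)" by (fact a)
  show "rr0 n R f i \<in> cols n R" "i < rr0 n R f i" "i \<in> R" using cell[OF b] by auto
  then show "rr0 n R f i \<le> n" "rr0 n R f i \<notin> R" using colsub colR by auto
qed

lemma rr0_gt_col: assumes j: "j \<in> cols n R" and r: "restricted_row n R f (top1 n R f j)"
  shows "j < rr0 n R f (top1 n R f j)"
proof -
  let ?i = "top1 n R f j" and ?j' = "rr0 n R f (top1 n R f j)"
  have r0: "restricted0 n R f ?i ?j'" using rr0_facts[OF r] by simp
  have c: "is_cell n R ?i j" "f ?i j" using top1_facts[OF j] by auto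
  have "?j' \<noteq> j" using r0 c by (auto simp: restricted0_def)
  moreover have "\<not> ?j' < j"
  proof
    assume lt: "?j' < j"
    have "is_cell n R ?i ?j'" "\<not> f ?i ?j'" "\<exists>i'. i' < ?i \<and> is_cell n R i' ?j' \<and> f i' ?j'"
      using r0 by (auto simp: restricted0_def)
    then show False using PT c lt unfolding perm_tableau_def by blast
  qed
  ultimately show ?thesis by simp
qed

lemma DD_eq: "DD = cols n R \<union> {i. restricted_row n R f i}"
  by (simp add: DD_def dot_labels_def)

lemma restr_R: "restricted_row n R f i \<Longrightarrow> i \<in> R" by (simp add: restricted_row_def)
lemma UU_R: "i \<in> UU \<Longrightarrow> i \<in> R" by (simp add: UU_def unrestricted_row_def)

lemma disjDU: "DD \<inter> UU = {}"
  using colR by (auto simp: DD_eq UU_def unrestricted_row_def restricted_row_def)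

sublocale forest DD UU par gt
  by unfold_locales (rule disjDU)

lemma par_col: "k \<in> cols n R \<Longrightarrow> par k = top1 n R f k" by (simp add: par_def)
lemma par_row: "k \<notin> cols n R \<Longrightarrow> par k = rr0 n R f k" by (simp add: par_def)

lemma R_split: "i \<in> R \<Longrightarrow> restricted_row n R f i \<or> i \<in> UU"
  by (auto simp: UU_def unrestricted_row_def restricted_row_def)

lemma par_in: assumes "k \<in> DD" shows "par k \<in> DD \<union> UU"
proof (cases "k \<in> cols n R")
  case True
  then have "par k \<in> R" using top1_facts par_col by simp
  then show ?thesis using R_split DD_eq by auto
next
  case False
  then have "restricted_row n R f k" using assms DD_eq by auto
  then show ?thesis using rr0_facts par_row False DD_eq by auto
qed

lemma R_DD: "i \<in> R \<Longrightarrow> i \<in> DD \<longleftrightarrow> restricted_row n R f i"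
  using colR by (auto simp: DD_eq)

lemma nxt_eq: assumes "k \<in> DD" shows "nxt n R f k = (if par k \<in> DD then Some (par k) else None)"
proof (cases "k \<in> cols n R")
  case True
  then have "par k \<in> R" using top1_facts par_col by simp
  then show ?thesis using True R_DD par_col by (auto simp: nxt_def)
next
  case False
  then have "restricted_row n R f k" using assms DD_eq by auto
  then show ?thesis using False rr0_facts par_row DD_eq by (auto simp: nxt_def)
qed

definition h where "h k = (if k \<in> cols n R then 2 * (n + 1 - k)
   else if restricted_row n R f k then 2 * (n + 1 - rr0 n R f k) + 1 else 0)"

lemma h_par: assumes "k \<in> DD" shows "h (par k) < h k"
proof (cases "k \<in> cols n R")
  case True
  let ?i = "top1 n R f k"
  have pk: "par k = ?i" "?i \<in> R" using True par_col top1_facts by auto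
  have kn: "k \<le> n" "1 \<le> k" using True colsub by auto
  have iC: "?i \<notin> cols n R" using pk colR by blast
  show ?thesis
  proof (cases "restricted_row n R f ?i")
    case r: True
    have "k < rr0 n R f ?i" "rr0 n R f ?i \<le> n" using rr0_gt_col[OF True r] rr0_facts[OF r] by auto
    then show ?thesis using pk iC r True kn by (simp add: h_def)
  next
    case False
    then show ?thesis using pk iC True kn by (simp add: h_def)
  qed
next
  case False
  then have r: "restricted_row n R f k" using assms DD_eq by auto
  then have "par k \<in> cols n R" "par k = rr0 n R f k" using False rr0_facts par_row by auto
  then show ?thesis using False r by (simp add: h_def)
qed

lemma h_tr: "(x, y) \<in> rel\<^sup>+ \<Longrightarrow> h y < h x"
proof (induction rule: trancl_induct)
  case (base y) then show ?case using h_par by auto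
next
  case (step y z) then show ?case using h_par by (metis rel_iff less_trans)
qed

lemma acyc: "(x, x) \<notin> rel\<^sup>+" using h_tr by blast

lemma iap_single: "is_alt_path n R f k [x] \<longleftrightarrow> x = k \<and> nxt n R f k = None"
  by (auto simp: is_alt_path_def)

lemma iap_cons2: "is_alt_path n R f k (x # y # ps) \<longleftrightarrow>
    x = k \<and> nxt n R f k = Some y \<and> is_alt_path n R f y (y # ps)"
  unfolding is_alt_path_def
  apply (subst all_nat_split)
  apply auto
  done

lemma iap_hd: "is_alt_path n R f k ps \<Longrightarrow> ps = k # tl ps"
  by (cases ps) (auto simp: is_alt_path_def)

lemma iap_unique: "is_alt_path n R f k ps \<Longrightarrow> is_alt_path n R f k qs \<Longrightarrow> ps = qs"
proof (induction ps arbitrary: k qs)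
  case Nil then show ?case by (simp add: is_alt_path_def)
next
  case (Cons x ps)
  obtain qs' where qs: "qs = k # qs'" using iap_hd[OF Cons.prems(2)] by blast
  have xk: "x = k" using iap_hd[OF Cons.prems(1)] by simp
  show ?case
  proof (cases ps)
    case Nil
    then have "nxt n R f k = None" using Cons.prems(1) xk iap_single by simp
    then show ?thesis using Nil xk qs Cons.prems(2)
      by (cases qs') (auto simp: iap_cons2)
  next
    case (Cons y ps'')
    then have a: "nxt n R f k = Some y" "is_alt_path n R f y (y # ps'')"
      using Cons.prems(1) xk iap_cons2 by auto
    show ?thesis
    proof (cases qs')
      case Nil then show ?thesis using qs Cons.prems(2) a iap_single by simp
    next
      case (Cons w qs'')
      then have "nxt n R f k = Some w" "is_alt_path n R f w (w # qs'')"
        using qs \<open>is_alt_path n R f k qs\<close> iap_cons2 by auto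
      then have "w = y" "is_alt_path n R f y (y # qs'')" using a by auto
      then have "y # ps'' = y # qs''" using \<open>ps = y # ps''\<close> a Cons.IH by metis
      then show ?thesis using qs xk Cons \<open>ps = y # ps''\<close> \<open>w = y\<close> by simp
    qed
  qed
qed

lemma iap_ex: "k \<in> DD \<Longrightarrow> \<exists>ps. is_alt_path n R f k ps"
proof (induction k rule: measure_induct_rule[where f=h])
  case (less k)
  show ?case
  proof (cases "par k \<in> DD")
    case True
    then obtain ps where ps: "is_alt_path n R f (par k) ps" using less h_par by blast
    then have "ps = par k # tl ps" by (rule iap_hd)
    then have "is_alt_path n R f k (k # ps)" using ps nxt_eq[OF less.prems] True
      by (metis iap_cons2)
    then show ?thesis by blast
  next
    case False
    then have "is_alt_path n R f k [k]" using nxt_eq[OF less.prems] iap_single by simp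
    then show ?thesis by blast
  qed
qed

lemma alt_path_is: assumes "k \<in> DD" shows "is_alt_path n R f k (alt_path n R f k)"
proof -
  obtain ps where ps: "is_alt_path n R f k ps" using iap_ex[OF assms] by blast
  have "alt_path n R f k = ps" unfolding alt_path_def
    using ps iap_unique by blast
  then show ?thesis using ps by simp
qed

lemma alt_path_eq: "is_alt_path n R f k ps \<Longrightarrow> alt_path n R f k = ps"
  unfolding alt_path_def using iap_unique by blast

lemma alt_path_rec: assumes "k \<in> DD"
  shows "alt_path n R f k = (if par k \<in> DD then k # alt_path n R f (par k) else [k])"
proof (cases "par k \<in> DD")
  case True
  have ps: "is_alt_path n R f (par k) (alt_path n R f (par k))" by (rule alt_path_is[OF True])
  then have e: "alt_path n R f (par k) = par k # tl (alt_path n R f (par k))" by (rule iap_hd)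
  have "is_alt_path n R f k (k # alt_path n R f (par k))"
    using ps e nxt_eq[OF assms] True by (metis iap_cons2)
  then show ?thesis using True alt_path_eq by simp
next
  case False
  then have "is_alt_path n R f k [k]" using nxt_eq[OF assms] iap_single by simp
  then show ?thesis using False alt_path_eq by simp
qed

lemma set_alt_path: "k \<in> DD \<Longrightarrow> set (alt_path n R f k) = {z. (k, z) \<in> rel\<^sup>*} \<inter> DD"
proof (induction k rule: measure_induct_rule[where f=h])
  case (less k)
  show ?case
  proof (cases "par k \<in> DD")
    case True
    then have "set (alt_path n R f (par k)) = {z. (par k, z) \<in> rel\<^sup>*} \<inter> DD"
      using less h_par by blast
    then show ?thesis using alt_path_rec[OF less.prems] True rtr_D[OF less.prems] less.prems
      by auto
  next
    case False
    then show ?thesis using alt_path_rec[OF less.prems] rtr_D[OF less.prems] rtr_notD[OF False]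
      less.prems by auto
  qed
qed

lemma alt_path_nth: assumes "k \<in> DD" and "Suc m < length (alt_path n R f k)"
  shows "alt_path n R f k ! Suc m = par (alt_path n R f k ! m)"
proof -
  let ?ps = "alt_path n R f k"
  have "nxt n R f (?ps ! m) = Some (?ps ! Suc m)"
    using alt_path_is[OF assms(1)] assms(2) by (simp add: is_alt_path_def)
  moreover have "?ps ! m \<in> DD" using set_alt_path[OF assms(1)] assms(2)
    by (metis IntE Suc_lessD nth_mem)
  ultimately show ?thesis using nxt_eq by (metis option.distinct(1) option.inject)
qed

lemma alt_path_last: assumes "k \<in> DD"
  shows "par (last (alt_path n R f k)) \<notin> DD" "last (alt_path n R f k) \<in> DD"
proof -
  let ?ps = "alt_path n R f k"
  have ne: "?ps \<noteq> []" using alt_path_is[OF assms] by (simp add: is_alt_path_def)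
  show l: "last ?ps \<in> DD" using set_alt_path[OF assms] ne last_in_set by blast
  have "nxt n R f (last ?ps) = None" using alt_path_is[OF assms] by (simp add: is_alt_path_def)
  then show "par (last ?ps) \<notin> DD" using nxt_eq[OF l] by (auto split: if_splits)
qed

end


context ptab begin

lemma gt_asym: "gt a b \<Longrightarrow> \<not> gt b a" by (auto simp: gt_def)

lemma dot_pos_col: "a \<in> cols n R \<Longrightarrow> dot_pos n R f a = (par a, a)"
  by (simp add: dot_pos_def par_col)
lemma dot_pos_row: "a \<notin> cols n R \<Longrightarrow> dot_pos n R f a = (a, par a)"
  by (simp add: dot_pos_def par_row)

lemma diverge:
  assumes iD: "i \<in> DD" and jD: "j \<in> DD"
    and ni: "i \<notin> set (alt_path n R f j)" and nj: "j \<notin> set (alt_path n R f i)"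
  shows "\<exists>a b. (i, a) \<in> rel\<^sup>* \<and> (j, b) \<in> rel\<^sup>* \<and> a \<noteq> b \<and> a \<in> DD \<and> b \<in> DD \<and>
     (path_greater n R f i j \<longleftrightarrow> gt a b) \<and>
     (par a = par b \<or> (a \<in> cols n R \<and> b \<in> cols n R \<and> par a \<in> UU \<and> par b \<in> UU))"
proof -
  define pa where "pa = alt_path n R f i"
  define pb where "pb = alt_path n R f j"
  define c where "c = common_suffix_len pa pb"
  have c1: "c \<le> length pa" "c \<le> length pb" "drop (length pa - c) pa = drop (length pb - c) pb"
    using csl(1)[of pa pb] c_def by auto
  have hpa: "pa = i # tl pa" using iap_hd[OF alt_path_is[OF iD]] pa_def by simp
  have hpb: "pb = j # tl pb" using iap_hd[OF alt_path_is[OF jD]] pb_def by simp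
  have cla: "c < length pa"
  proof (rule ccontr)
    assume "\<not> c < length pa"
    then have "c = length pa" using c1 by simp
    then have "pa = drop (length pb - c) pb" using c1 by simp
    then have "set pa \<subseteq> set pb" by (metis set_drop_subset)
    then have "i \<in> set pb" using hpa by (metis list.set_intros(1) subsetD)
    then show False using ni pb_def by simp
  qed
  have clb: "c < length pb"
  proof (rule ccontr)
    assume "\<not> c < length pb"
    then have "c = length pb" using c1 by simp
    then have "pb = drop (length pa - c) pa" using c1 by simp
    then have "set pb \<subseteq> set pa" by (metis set_drop_subset)
    then have "j \<in> set pa" using hpb by (metis list.set_intros(1) subsetD)
    then show False using nj pa_def by simp
  qed
  define a where "a = pa ! (length pa - Suc c)"
  define b where "b = pb ! (length pb - Suc c)"
  have ab: "a \<noteq> b" using csl(2)[of pa pb] cla clb a_def b_def c_def by simp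
  have setpa: "set pa = {z. (i, z) \<in> rel\<^sup>*} \<inter> DD" using set_alt_path[OF iD] pa_def by simp
  have setpb: "set pb = {z. (j, z) \<in> rel\<^sup>*} \<inter> DD" using set_alt_path[OF jD] pb_def by simp
  have ain: "a \<in> set pa" unfolding a_def using cla by simp
  have bin: "b \<in> set pb" unfolding b_def using clb by simp
  have la: "last (take (length pa - c) pa) = a"
  proof -
    have "take (length pa - c) pa \<noteq> []" using cla by (cases pa) auto
    then show ?thesis unfolding a_def using cla
      by (simp add: last_conv_nth nth_take)
  qed
  have lb: "last (take (length pb - c) pb) = b"
  proof -
    have "take (length pb - c) pb \<noteq> []" using clb by (cases pb) auto
    then show ?thesis unfolding b_def using clb
      by (simp add: last_conv_nth nth_take)
  qed
  have pg: "path_greater n R f i j \<longleftrightarrow> gt a b"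
    unfolding path_greater_def Let_def gt_def
    using la lb pa_def pb_def c_def by simp
  have rel3: "par a = par b \<or> (a \<in> cols n R \<and> b \<in> cols n R \<and> par a \<in> UU \<and> par b \<in> UU)"
  proof (cases "c = 0")
    case False
    have e1: "pa ! Suc (length pa - Suc c) = par a"
      using alt_path_nth[OF iD, of "length pa - Suc c"] cla False pa_def a_def by simp
    have e2: "pb ! Suc (length pb - Suc c) = par b"
      using alt_path_nth[OF jD, of "length pb - Suc c"] clb False pb_def b_def by simp
    have "hd (drop (length pa - c) pa) = pa ! (length pa - c)"
      using cla False by (simp add: hd_drop_conv_nth)
    moreover have "hd (drop (length pb - c) pb) = pb ! (length pb - c)"
      using clb False by (simp add: hd_drop_conv_nth)
    moreover have "Suc (length pa - Suc c) = length pa - c" "Suc (length pb - Suc c) = length pb - c"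
      using cla clb False by auto
    ultimately have "par a = par b" using e1 e2 c1(3) by metis
    then show ?thesis by simp
  next
    case True
    have "pa \<noteq> []" using hpa by (metis list.distinct(1))
    then have "a = last pa" unfolding a_def True by (simp add: last_conv_nth)
    then have a1: "par a \<notin> DD" "a \<in> DD" using alt_path_last[OF iD] pa_def by auto
    have "pb \<noteq> []" using hpb by (metis list.distinct(1))
    then have "b = last pb" unfolding b_def True by (simp add: last_conv_nth)
    then have b1: "par b \<notin> DD" "b \<in> DD" using alt_path_last[OF jD] pb_def by auto
    have "par a \<in> UU" "par b \<in> UU" using a1 b1 par_in by auto
    moreover have "a \<in> cols n R"
    proof (rule ccontr)
      assume "a \<notin> cols n R"
      then have "restricted_row n R f a" using a1 DD_eq by auto
      then show False using a1 rr0_facts par_row \<open>a \<notin> cols n R\<close> DD_eq by auto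
    qed
    moreover have "b \<in> cols n R"
    proof (rule ccontr)
      assume "b \<notin> cols n R"
      then have "restricted_row n R f b" using b1 DD_eq by auto
      then show False using b1 rr0_facts par_row \<open>b \<notin> cols n R\<close> DD_eq by auto
    qed
    ultimately show ?thesis by simp
  qed
  show ?thesis using ab ain bin setpa setpb pg rel3 by blast
qed

lemma notU_D: "a \<in> DD \<Longrightarrow> a \<notin> UU" using disjDU by blast

lemma diverge_Q:
  assumes iD: "i \<in> DD" and jD: "j \<in> DD"
    and ni: "i \<notin> set (alt_path n R f j)" and nj: "j \<notin> set (alt_path n R f i)"
  shows "(\<not> path_greater n R f i j \<longrightarrow> Q i j) \<and> (path_greater n R f i j \<longrightarrow> Q j i)"
proof -
  obtain a b where ia: "(i, a) \<in> rel\<^sup>*" and jb: "(j, b) \<in> rel\<^sup>*" and ab: "a \<noteq> b"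
    and aD: "a \<in> DD" and bD: "b \<in> DD" and pg: "path_greater n R f i j \<longleftrightarrow> gt a b"
    and r3: "par a = par b \<or> (a \<in> cols n R \<and> b \<in> cols n R \<and> par a \<in> UU \<and> par b \<in> UU)"
    using diverge[OF assms] by blast
  have aU: "a \<notin> UU" and bU: "b \<notin> UU" using aD bD notU_D by auto
  show ?thesis
  proof (cases "par a = par b")
    case True
    then have s1: "sibl a b" "sibl b a" using aD bD by (auto simp: sibl_def)
    show ?thesis
    proof (intro conjI impI)
      assume "\<not> path_greater n R f i j"
      then have "ltr a b" using pg aU by (simp add: ltr_def)
      then show "Q i j" unfolding Q_def using ia jb ab s1 by blast
    next
      assume "path_greater n R f i j"
      then have "ltr b a" using pg bU gt_asym by (simp add: ltr_def)
      then show "Q j i" unfolding Q_def using ia jb ab s1 by blast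
    qed
  next
    case False
    then have c: "a \<in> cols n R" "b \<in> cols n R" "par a \<in> UU" "par b \<in> UU" using r3 by auto
    have g: "gt a b \<longleftrightarrow> par a > par b" using c False by (auto simp: gt_def dot_pos_col)
    have ia': "(i, par a) \<in> rel\<^sup>*" using ia aD by (meson rel_iff rtrancl.rtrancl_into_rtrancl)
    have jb': "(j, par b) \<in> rel\<^sup>*" using jb bD by (meson rel_iff rtrancl.rtrancl_into_rtrancl)
    have s1: "sibl (par a) (par b)" "sibl (par b) (par a)" using c by (auto simp: sibl_def)
    show ?thesis
    proof (intro conjI impI)
      assume "\<not> path_greater n R f i j"
      then have "ltr (par a) (par b)" using pg g c False by (auto simp: ltr_def)
      then show "Q i j" unfolding Q_def using ia' jb' False s1 by blast
    next
      assume "path_greater n R f i j"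
      then have "ltr (par b) (par a)" using pg g c by (auto simp: ltr_def)
      then show "Q j i" unfolding Q_def using ia' jb' False s1 by metis
    qed
  qed
qed

end


context ptab begin

definition SS where "SS c = UU \<union> {j \<in> cols n R. c < j} \<union> {i. restricted_row n R f i \<and> c < rr0 n R f i}"
definition Rj where "Rj j = {i. rightmost_r0 n R f i j}"

lemma Rj_iff: "i \<in> Rj j \<longleftrightarrow> restricted_row n R f i \<and> rr0 n R f i = j"
  unfolding Rj_def using rr0_unique rr0_spec by blast

lemma h_col: "j \<in> cols n R \<Longrightarrow> h j = 2 * (n + 1 - j)" by (simp add: h_def)
lemma h_rrow: assumes "restricted_row n R f i" shows "h i = 2 * (n + 1 - rr0 n R f i) + 1"
proof -
  have "i \<notin> cols n R" using restr_R[OF assms] colR by blast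
  then show ?thesis using assms by (simp add: h_def)
qed

lemma hSS: assumes j: "j \<in> cols n R" and y: "y \<in> SS j" shows "h y < h j"
proof -
  have jn: "j \<le> n" "1 \<le> j" using j colsub by auto
  consider "y \<in> UU" | "y \<in> cols n R" "j < y" | "restricted_row n R f y" "j < rr0 n R f y"
    using y by (auto simp: SS_def)
  then show ?thesis
  proof cases
    case 1
    have "y \<notin> cols n R" using 1 UU_R colR by blast
    moreover have "\<not> restricted_row n R f y" using 1 by (simp add: UU_def unrestricted_row_def restricted_row_def)
    ultimately have "h y = 0" by (simp add: h_def)
    then show ?thesis using j jn by (simp add: h_col)
  next
    case 2
    then have "y \<le> n" using colsub by auto
    then show ?thesis using 2 j jn by (simp add: h_col)
  next
    case 3
    then have "rr0 n R f y \<le> n" using rr0_facts by auto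
    then show ?thesis using 3 j jn by (simp add: h_col h_rrow)
  qed
qed

lemma closed_SS: "closed (SS c)"
  unfolding closed_def
proof (intro ballI impI)
  fix y assume y: "y \<in> SS c" and yD: "y \<in> DD"
  show "par y \<in> SS c"
  proof (cases "y \<in> cols n R")
    case True
    then have cy: "c < y" using y yD disjDU by (auto simp: SS_def UU_def unrestricted_row_def restricted_row_def colR)
    have pR: "par y \<in> R" using True top1_facts par_col by simp
    show ?thesis
    proof (cases "restricted_row n R f (par y)")
      case True
      then show ?thesis using rr0_gt_col[OF \<open>y \<in> cols n R\<close>] par_col[OF \<open>y \<in> cols n R\<close>] cy
        by (auto simp: SS_def)
    next
      case False
      then show ?thesis using pR R_split by (auto simp: SS_def)
    qed
  next
    case False
    then have r: "restricted_row n R f y" using yD DD_eq by auto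
    then have "c < rr0 n R f y" using y disjDU yD False by (auto simp: SS_def)
    then show ?thesis using r rr0_facts par_row[OF False] by (auto simp: SS_def)
  qed
qed

lemma rows_ins:
  assumes j: "j \<in> cols n R"
  shows "sorted_wrt (<) ws \<Longrightarrow> Inv (insert j (SS j) \<union> A) xs \<Longrightarrow> closed (insert j (SS j) \<union> A) \<Longrightarrow>
    A \<subseteq> Rj j \<Longrightarrow> set ws \<union> A = Rj j \<Longrightarrow> (\<forall>a\<in>A. \<forall>w\<in>set ws. a < w) \<Longrightarrow>
    Inv (insert j (SS j) \<union> Rj j) (foldl (\<lambda>xs w. ins_left [w] j xs) xs ws)
    \<and> closed (insert j (SS j) \<union> Rj j)"
proof (induction ws arbitrary: A xs)
  case Nil then show ?case by simp
next
  case (Cons w ws)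
  let ?X = "insert j (SS j)"
  have wR: "w \<in> Rj j" using Cons.prems(5) by auto
  then have wr: "restricted_row n R f w" "rr0 n R f w = j" using Rj_iff by auto
  have wC: "w \<notin> cols n R" using wr rr0_facts colR by blast
  have wD: "w \<in> DD" using wr DD_eq by auto
  have pw: "par w = j" using wr par_row[OF wC] by simp
  have wnA: "w \<notin> A" using Cons.prems(6) by auto
  have wj: "w \<noteq> j" using rr0_facts(3)[OF wr(1)] wr(2) by simp
  have wnX: "w \<notin> ?X" using wr wC disjDU wD wj by (auto simp: SS_def)
  have hw: "h w = h j + 1" using wr h_rrow h_col[OF j] by simp
  have hb: "h y \<le> h w" if yX: "y \<in> ?X \<union> A" for y
  proof -
    consider "y \<in> SS j" | "y = j" | "y \<in> A" using yX by blast
    then show ?thesis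
    proof cases
      case 1 then show ?thesis using hSS[OF j] hw by fastforce
    next
      case 2 then show ?thesis using hw by simp
    next
      case 3 then have "restricted_row n R f y" "rr0 n R f y = j" using Cons.prems(4) Rj_iff by auto
      then show ?thesis using h_rrow wr by simp
    qed
  qed
  have step: "Inv (insert w (?X \<union> A)) (ins_left [w] (par w) xs) \<and> closed (insert w (?X \<union> A))"
  proof (rule Inv_step[OF Cons.prems(2) wD])
    show "w \<notin> ?X \<union> A" using wnA wnX by blast
    show "par w \<in> ?X \<union> A" using pw by simp
    show "closed (?X \<union> A)" by (fact Cons.prems(3))
    show "\<And>x. (x, x) \<notin> rel\<^sup>+" by (rule acyc)
    show "(y, w) \<notin> rel\<^sup>*" if "y \<in> ?X \<union> A" for y
    proof
      assume "(y, w) \<in> rel\<^sup>*"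
      then have "y = w \<or> (y, w) \<in> rel\<^sup>+" by (meson rtranclD)
      then show False using that wnA wnX h_tr hb[OF that] by fastforce
    qed
    show "gt w b \<and> \<not> gt b w" if b: "b \<in> ?X \<union> A" "b \<in> DD" "par b = par w" for b
    proof -
      have bC: "b \<notin> cols n R"
      proof
        assume "b \<in> cols n R"
        then have "par b \<in> R" using top1_facts par_col by simp
        then show False using b(3) pw colR[OF j] by simp
      qed
      then have br: "restricted_row n R f b" "rr0 n R f b = j" using b(2) DD_eq b(3) pw par_row by auto
      then have "b \<in> A" using b(1) bC disjDU b(2) j colR by (auto simp: SS_def)
      then have "b < w" using Cons.prems(6) by auto
      then show ?thesis using bC wC by (auto simp: gt_def dot_pos_row)
    qed
  qed
  have e: "insert w (?X \<union> A) = ?X \<union> insert w A" by blast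
  show ?case
    using Cons.IH[of "insert w A" "ins_left [w] j xs"] step pw Cons.prems wR unfolding e
    by auto
qed

lemma SS_pred: assumes j: "j \<in> cols n R" shows "SS (j - 1) = insert j (SS j) \<union> Rj j"
proof -
  have j1: "1 \<le> j" using j colsub by auto
  have e1: "{x \<in> cols n R. j - 1 < x} = insert j {x \<in> cols n R. j < x}" using j j1 by auto
  have e2: "{i. restricted_row n R f i \<and> j - 1 < rr0 n R f i} =
      {i. restricted_row n R f i \<and> j < rr0 n R f i} \<union> Rj j" using j1 Rj_iff by auto
  show ?thesis unfolding SS_def e1 e2 by auto
qed

lemma col_step:
  assumes j: "j \<in> cols n R" and I: "Inv (SS j) xs"
  shows "Inv (SS (j - 1)) (xi_step n R f xs j)"
proof -
  let ?t = "top1 n R f j"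
  have jD: "j \<in> DD" using j DD_eq by auto
  have pj: "par j = ?t" using par_col[OF j] .
  have jnS: "j \<notin> SS j" using j disjDU jD colR by (auto simp: SS_def restricted_row_def)
  have tS: "?t \<in> SS j"
  proof (cases "restricted_row n R f ?t")
    case True then show ?thesis using rr0_gt_col[OF j] by (auto simp: SS_def)
  next
    case False then show ?thesis using top1_facts[OF j] R_split by (auto simp: SS_def)
  qed
  have s1: "Inv (insert j (SS j)) (ins_left [j] (par j) xs) \<and> closed (insert j (SS j))"
  proof (rule Inv_step[OF I jD jnS])
    show "par j \<in> SS j" using tS pj by simp
    show "closed (SS j)" by (rule closed_SS)
    show "\<And>x. (x, x) \<notin> rel\<^sup>+" by (rule acyc)
    show "(y, j) \<notin> rel\<^sup>*" if "y \<in> SS j" for y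
    proof
      assume "(y, j) \<in> rel\<^sup>*"
      then have "y = j \<or> (y, j) \<in> rel\<^sup>+" by (meson rtranclD)
      then show False using that jnS h_tr hSS[OF j that] by fastforce
    qed
    show "gt j b \<and> \<not> gt b j" if b: "b \<in> SS j" "b \<in> DD" "par b = par j" for b
    proof -
      have bC: "b \<in> cols n R"
      proof (rule ccontr)
        assume "b \<notin> cols n R"
        then have "par b \<in> cols n R" using b(2) DD_eq par_row rr0_facts by auto
        then show False using b(3) pj top1_facts[OF j] colR by simp
      qed
      then have "j < b" using b(1) disjDU b(2) by (auto simp: SS_def restricted_row_def colR)
      then show ?thesis using bC j b(3) by (auto simp: gt_def dot_pos_col)
    qed
  qed
  have fin: "finite (Rj j)"
  proof -
    have "Rj j \<subseteq> {..<j}" using cell by (auto simp: Rj_def rightmost_r0_def restricted0_def)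
    then show ?thesis using finite_subset by blast
  qed
  have jnot: "j \<notin> set (sorted_list_of_set (Rj j))"
    using fin cell by (auto simp: Rj_def rightmost_r0_def restricted0_def)
  have xs_eq: "xi_step n R f xs j = foldl (\<lambda>xs w. ins_left [w] j xs) (ins_left [j] (par j) xs)
      (sorted_list_of_set (Rj j))"
    unfolding xi_step_def Let_def pj Rj_def[symmetric] using ins_left_foldl[OF jnot] by simp
  have "Inv (insert j (SS j) \<union> Rj j) (xi_step n R f xs j)"
    using rows_ins[OF j, of "sorted_list_of_set (Rj j)" "{}" "ins_left [j] (par j) xs"] s1 fin
    unfolding xs_eq by (simp add: strict_sorted_list_of_set)
  then show ?thesis using SS_pred[OF j] by simp
qed

lemma cols_fold:
  "set cs = {j \<in> cols n R. j \<le> c} \<Longrightarrow> sorted_wrt (>) cs \<Longrightarrow> Inv (SS c) xs \<Longrightarrow>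
   Inv (SS 0) (foldl (xi_step n R f) xs cs)"
proof (induction cs arbitrary: c xs)
  case Nil
  have "SS c = SS 0"
  proof -
    have "\<And>j. j \<in> cols n R \<Longrightarrow> c < j" using Nil.prems(1) by (metis (mono_tags) empty_iff list.set(1) mem_Collect_eq not_le_imp_less)
    moreover have "\<And>j. j \<in> cols n R \<Longrightarrow> 0 < j" using colsub by fastforce
    ultimately show ?thesis using rr0_facts by (auto simp: SS_def)
  qed
  then show ?case using Nil by simp
next
  case (Cons j cs)
  have j: "j \<in> cols n R" "j \<le> c" using Cons.prems(1) by auto
  have lt: "\<forall>x\<in>set cs. x < j" using Cons.prems(2) by simp
  have "SS c = SS j"
  proof -
    have a: "\<And>x. x \<in> cols n R \<Longrightarrow> j < x \<Longrightarrow> c < x"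
    proof (rule ccontr)
      fix x assume "x \<in> cols n R" "j < x" "\<not> c < x"
      then have "x \<in> set (j # cs)" using Cons.prems(1) by simp
      then show False using lt \<open>j < x\<close> by auto
    qed
    show ?thesis using a j rr0_facts by (auto simp: SS_def)
  qed
  then have I: "Inv (SS j) xs" using Cons.prems(3) by simp
  have st: "set cs = {x \<in> cols n R. x \<le> j - 1}"
  proof -
    have "x \<in> set cs" if "x \<in> cols n R" "x \<le> j - 1" for x
    proof -
      have "1 \<le> j" using j colsub by auto
      then have "x \<le> c" "x \<noteq> j" using that j by auto
      then show ?thesis using Cons.prems(1) that by auto
    qed
    moreover have "x \<in> cols n R \<and> x \<le> j - 1" if "x \<in> set cs" for x
      using that lt Cons.prems(1) by fastforce
    ultimately show ?thesis by blast
  qed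
  show ?case using Cons.IH[OF st _ col_step[OF j(1) I]] Cons.prems(2) by simp
qed

lemma xi_Inv: "Inv (DD \<union> UU) (xi n R f)"
proof -
  have fc: "finite (cols n R)" using colsub finite_subset by blast
  have "UU \<subseteq> {1..n}" using UU_R Rsub by blast
  then have fu: "finite UU" using finite_subset by blast
  have "\<And>x. restricted_row n R f x \<Longrightarrow> \<not> n < rr0 n R f x" using rr0_facts(4) by (simp add: not_less)
  moreover have "\<And>x. x \<in> cols n R \<Longrightarrow> \<not> n < x" using colsub by (auto simp: not_less)
  ultimately have Sn: "SS n = UU" by (auto simp: SS_def)
  have "{i. restricted_row n R f i \<and> 0 < rr0 n R f i} = {i. restricted_row n R f i}"
    using rr0_facts(3) by fastforce
  moreover have "{j \<in> cols n R. 0 < j} = cols n R" using colsub by fastforce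
  ultimately have S0: "SS 0 = DD \<union> UU" unfolding SS_def DD_eq by auto
  have I0: "Inv (SS n) (sorted_list_of_set {i. unrestricted_row n R f i})"
    using Inv_init[OF fu] Sn by (simp add: UU_def)
  have ce: "{j \<in> cols n R. j \<le> n} = cols n R" using colsub by fastforce
  have s1: "set (rev (sorted_list_of_set (cols n R))) = {j \<in> cols n R. j \<le> n}"
    unfolding ce using fc by simp
  have s2: "sorted_wrt (>) (rev (sorted_list_of_set (cols n R)))"
    by (simp add: sorted_wrt_rev strict_sorted_list_of_set)
  have "Inv (SS 0) (foldl (xi_step n R f) (sorted_list_of_set {i. unrestricted_row n R f i})
      (rev (sorted_list_of_set (cols n R))))"
    by (rule cols_fold[OF s1 s2 I0])
  then show ?thesis unfolding xi_def S0 .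
qed

theorem main:
  assumes iD: "i \<in> DD" and jD: "j \<in> DD" and ij: "i \<noteq> j"
  shows "before (xi n R f) i j \<longleftrightarrow> (path_less n R f i j \<or> j \<in> set (alt_path n R f i))"
proof -
  have I: "Inv (DD \<union> UU) (xi n R f)" by (rule xi_Inv)
  have ordr: "\<And>x y. x \<in> DD \<Longrightarrow> y \<in> DD \<Longrightarrow> x \<noteq> y \<Longrightarrow> before (xi n R f) x y \<longleftrightarrow> Q x y"
    using I unfolding Inv_def by blast
  have dist: "distinct (xi n R f)" using I unfolding Inv_def by blast
  have anc: "Q x y" if "x \<in> DD" "y \<in> set (alt_path n R f x)" "x \<noteq> y" for x y
  proof -
    have "(x, y) \<in> rel\<^sup>*" using set_alt_path[OF that(1)] that(2) by auto
    then have "(x, y) \<in> rel\<^sup>+" using that(3) by (meson rtranclD)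
    then show ?thesis by (simp add: Q_def)
  qed
  show ?thesis
  proof
    assume b: "before (xi n R f) i j"
    show "path_less n R f i j \<or> j \<in> set (alt_path n R f i)"
    proof (rule ccontr)
      assume c: "\<not> (path_less n R f i j \<or> j \<in> set (alt_path n R f i))"
      have "Q j i"
      proof (cases "i \<in> set (alt_path n R f j)")
        case True then show ?thesis using anc[OF jD True] ij by simp
      next
        case False
        then have "path_greater n R f i j" using c by (auto simp: path_less_def)
        then show ?thesis using diverge_Q[OF iD jD False] c by simp
      qed
      then have "before (xi n R f) j i" using ordr[OF jD iD] ij by simp
      then show False using before_antisym[OF dist b] by simp
    qed
  next
    assume "path_less n R f i j \<or> j \<in> set (alt_path n R f i)"
    then have "Q i j"
    proof
      assume "path_less n R f i j"
      then show "Q i j" using diverge_Q[OF iD jD] by (simp add: path_less_def)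
    next
      assume "j \<in> set (alt_path n R f i)"
      then show "Q i j" using anc[OF iD] ij by simp
    qed
    then show "before (xi n R f) i j" using ordr[OF iD jD ij] by simp
  qed
qed

end


theorem lemma2p5:
  fixes n :: nat and R :: "nat set" and f :: "nat \<Rightarrow> nat \<Rightarrow> bool" and i j :: nat
  assumes "perm_tableau n R f"
    and "i \<in> dot_labels n R f" and "j \<in> dot_labels n R f" and "i \<noteq> j"
  shows "(\<exists>us vs ws. xi n R f = us @ i # vs @ j # ws) \<longleftrightarrow>
         (path_less n R f i j \<or> j \<in> set (alt_path n R f i))"
proof -
  interpret P: ptab n R f by unfold_locales (rule assms(1))
  have "(\<exists>us vs ws. xi n R f = us @ i # vs @ j # ws) \<longleftrightarrow> before (xi n R f) i j"
    by (simp add: before_def)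
  also have "\<dots> \<longleftrightarrow> (path_less n R f i j \<or> j \<in> set (alt_path n R f i))"
    using P.main[of i j] assms by (simp add: P.DD_def)
  finally show ?thesis .
qed

end
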